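(* For a graph $G$ without isolated vertices, the following are equivalent: (1) $G$ is very well-covered; (2) $G$ has a perfect matching every edge of which (as a $2$-vertex set) is a strong clique; (3) $G$ has a perfect matching, and every edge of every perfect matching of $G$ is a strong clique; (4) $V(G)$ admits a partition into strong cliques of size two. In particular, every very well-covered graph is localizable.
   Context: A clique is strong if it intersects every maximal independent set. A graph is localizable if its vertex set admits a partition into strong cliques. A graph is well-covered if all its maximal independent sets have the same size; it is very well-covered if it is well-covered, has no isolated vertices, and $\alpha(G)=|V(G)|/2$, where $\alpha(G)$ is the independence number. *)

theory Defs
  imports Main "HOL-Library.Disjoint_Sets"
begin

definition graph :: "'a set \<Rightarrow> ('a \<Rightarrow> 'a \<Rightarrow> bool) \<Rightarrow> bool" where
  "graph V E \<longleftrightarrow> finite V \<and> (\<forall>u v. E u v \<longrightarrow> u \<in> V \<and> v \<in> V)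
     \<and> (\<forall>u v. E u v \<longrightarrow> E v u) \<and> (\<forall>u. \<not> E u u)"

definition no_isolated :: "'a set \<Rightarrow> ('a \<Rightarrow> 'a \<Rightarrow> bool) \<Rightarrow> bool" where
  "no_isolated V E \<longleftrightarrow> (\<forall>v\<in>V. \<exists>u. E v u)"

definition independent :: "'a set \<Rightarrow> ('a \<Rightarrow> 'a \<Rightarrow> bool) \<Rightarrow> 'a set \<Rightarrow> bool" where
  "independent V E S \<longleftrightarrow> S \<subseteq> V \<and> (\<forall>u\<in>S. \<forall>v\<in>S. \<not> E u v)"

definition max_independent :: "'a set \<Rightarrow> ('a \<Rightarrow> 'a \<Rightarrow> bool) \<Rightarrow> 'a set \<Rightarrow> bool" where
  "max_independent V E S \<longleftrightarrow> independent V E S \<and>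
     (\<forall>T. independent V E T \<and> S \<subseteq> T \<longrightarrow> T = S)"

definition clique :: "'a set \<Rightarrow> ('a \<Rightarrow> 'a \<Rightarrow> bool) \<Rightarrow> 'a set \<Rightarrow> bool" where
  "clique V E C \<longleftrightarrow> C \<subseteq> V \<and> (\<forall>u\<in>C. \<forall>v\<in>C. u \<noteq> v \<longrightarrow> E u v)"

definition strong_clique :: "'a set \<Rightarrow> ('a \<Rightarrow> 'a \<Rightarrow> bool) \<Rightarrow> 'a set \<Rightarrow> bool" where
  "strong_clique V E C \<longleftrightarrow> clique V E C \<and>
     (\<forall>S. max_independent V E S \<longrightarrow> C \<inter> S \<noteq> {})"

definition localizable :: "'a set \<Rightarrow> ('a \<Rightarrow> 'a \<Rightarrow> bool) \<Rightarrow> bool" where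
  "localizable V E \<longleftrightarrow> (\<exists>P. partition_on V P \<and> (\<forall>C\<in>P. strong_clique V E C))"

definition well_covered :: "'a set \<Rightarrow> ('a \<Rightarrow> 'a \<Rightarrow> bool) \<Rightarrow> bool" where
  "well_covered V E \<longleftrightarrow> (\<forall>S T. max_independent V E S \<and> max_independent V E T
      \<longrightarrow> card S = card T)"

definition independence_number :: "'a set \<Rightarrow> ('a \<Rightarrow> 'a \<Rightarrow> bool) \<Rightarrow> nat" where
  "independence_number V E = Max (card ` {S. independent V E S})"

definition very_well_covered :: "'a set \<Rightarrow> ('a \<Rightarrow> 'a \<Rightarrow> bool) \<Rightarrow> bool" where
  "very_well_covered V E \<longleftrightarrow> well_covered V E \<and> no_isolated V E \<and>
     2 * independence_number V E = card V"

definition perfect_matching :: "'a set \<Rightarrow> ('a \<Rightarrow> 'a \<Rightarrow> bool) \<Rightarrow> 'a set set \<Rightarrow> bool" where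
  "perfect_matching V E M \<longleftrightarrow> (\<forall>e\<in>M. \<exists>u v. e = {u, v} \<and> E u v)
     \<and> disjoint M \<and> \<Union>M = V"

end

theory Submission
  imports Defs
begin


lemma hall:
  fixes N :: "'a \<Rightarrow> 'b set"
  assumes "finite S" "\<forall>s\<in>S. finite (N s)" "\<forall>A\<subseteq>S. card A \<le> card (\<Union>(N ` A))"
  shows "\<exists>f. inj_on f S \<and> (\<forall>s\<in>S. f s \<in> N s)"
  using assms
proof (induction "card S" arbitrary: S N rule: less_induct)
  case less
  show ?case
  proof (cases "S = {}")
    case True then show ?thesis by auto
  next
    case False
    show ?thesis
    proof (cases "\<exists>A. A \<subseteq> S \<and> A \<noteq> {} \<and> A \<noteq> S \<and> card (\<Union>(N ` A)) = card A")
      case True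
      then obtain A where A: "A \<subseteq> S" "A \<noteq> {}" "A \<noteq> S" "card (\<Union>(N ` A)) = card A" by blast
      have fA: "finite A" using A(1) less.prems(1) finite_subset by blast
      have cA: "card A < card S" using A(1,3) less.prems(1) psubset_card_mono by blast
      have hA: "\<forall>B\<subseteq>A. card B \<le> card (\<Union>(N ` B))" using less.prems(3) A(1) by (meson subset_trans)
      have nA: "\<forall>s\<in>A. finite (N s)" using less.prems(2) A(1) by blast
      obtain f1 where f1: "inj_on f1 A" "\<forall>s\<in>A. f1 s \<in> N s"
        using less.hyps[OF cA fA nA hA] by blast
      define U where "U = \<Union>(N ` A)"
      define N' where "N' = (\<lambda>s. N s - U)"
      have fU: "finite U" using fA less.prems(2) A(1) by (auto simp: U_def)
      have "S - A \<subset> S" using A(1,2) by blast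
      then have cD: "card (S - A) < card S" using less.prems(1) psubset_card_mono by blast
      have hallD: "\<forall>C\<subseteq>S - A. card C \<le> card (\<Union>(N' ` C))"
      proof (intro allI impI)
        fix C assume C: "C \<subseteq> S - A"
        have eq: "\<Union>(N' ` C) = \<Union>(N ` (C \<union> A)) - U" by (auto simp: N'_def U_def)
        have fC: "finite C" using C less.prems(1) finite_subset by blast
        have fin: "finite (\<Union>(N ` (C \<union> A)))" using fC fA C A(1) less.prems(2) by auto
        have sub: "U \<subseteq> \<Union>(N ` (C \<union> A))" by (auto simp: U_def)
        have c1: "card (\<Union>(N' ` C)) = card (\<Union>(N ` (C \<union> A))) - card U"
          using eq card_Diff_subset[OF fU sub] by simp
        have "C \<union> A \<subseteq> S" using C A(1) by blast
        then have c2: "card (C \<union> A) \<le> card (\<Union>(N ` (C \<union> A)))" using less.prems(3) by blast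
        have c3: "card (C \<union> A) = card C + card A" using C fC fA by (intro card_Un_disjoint) auto
        show "card C \<le> card (\<Union>(N' ` C))" using c1 c2 c3 A(4) U_def by simp
      qed
      have fD: "finite (S - A)" using less.prems(1) by auto
      have fN': "\<forall>s\<in>S - A. finite (N' s)" using less.prems(2) by (auto simp: N'_def)
      obtain f2 where f2: "inj_on f2 (S - A)" "\<forall>s\<in>S-A. f2 s \<in> N' s"
        using less.hyps[OF cD fD fN' hallD] by blast
      define f where "f = (\<lambda>s. if s \<in> A then f1 s else f2 s)"
      have "inj_on f S"
        unfolding inj_on_def
      proof (intro ballI impI)
        fix x y assume x: "x \<in> S" and y: "y \<in> S" and fxy: "f x = f y"
        show "x = y"
        proof (cases "x \<in> A"; cases "y \<in> A")
          assume "x \<in> A" "y \<in> A" then show ?thesis using fxy f1(1) by (auto simp: f_def inj_on_def)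
        next
          assume "x \<notin> A" "y \<notin> A" then show ?thesis using fxy f2(1) x y by (auto simp: f_def inj_on_def)
        next
          assume a: "x \<in> A" "y \<notin> A"
          then have "f x \<in> U" using f1(2) by (auto simp: f_def U_def)
          moreover have "f y \<notin> U" using a y f2(2) by (auto simp: f_def N'_def)
          ultimately show ?thesis using fxy by simp
        next
          assume a: "x \<notin> A" "y \<in> A"
          then have "f y \<in> U" using f1(2) by (auto simp: f_def U_def)
          moreover have "f x \<notin> U" using a x f2(2) by (auto simp: f_def N'_def)
          ultimately show ?thesis using fxy by simp
        qed
      qed
      moreover have "\<forall>s\<in>S. f s \<in> N s" using f1(2) f2(2) by (auto simp: f_def N'_def)
      ultimately show ?thesis by blast
    next
      case False2: False
      obtain a where a: "a \<in> S" using False by blast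
      have "card {a} \<le> card (N a)" using less.prems(3) a by (metis ccpo_Sup_singleton empty_subsetI image_empty image_insert insert_subset)
      then have "N a \<noteq> {}" by auto
      then obtain b where b: "b \<in> N a" by blast
      define N' where "N' = (\<lambda>s. N s - {b})"
      have cD: "card (S - {a}) < card S" using a less.prems(1) by (meson card_Diff1_less)
      have hallD: "\<forall>C\<subseteq>S - {a}. card C \<le> card (\<Union>(N' ` C))"
      proof (intro allI impI)
        fix C assume C: "C \<subseteq> S - {a}"
        show "card C \<le> card (\<Union>(N' ` C))"
        proof (cases "C = {}")
          case True then show ?thesis by simp
        next
          case False
          have fC: "finite C" using C less.prems(1) finite_subset by blast
          have "C \<noteq> S" using C a by auto
          then have "card (\<Union>(N ` C)) \<noteq> card C" using False2 False C by blast
          moreover have "card C \<le> card (\<Union>(N ` C))" using less.prems(3) C by auto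
          moreover have eq: "\<Union>(N' ` C) = \<Union>(N ` C) - {b}" by (auto simp: N'_def)
          moreover have "card (\<Union>(N' ` C)) \<ge> card (\<Union>(N ` C)) - 1"
            unfolding eq by (metis card_Diff_singleton_if diff_le_self order_refl)
          ultimately show ?thesis by linarith
        qed
      qed
      have fD: "finite (S - {a})" using less.prems(1) by auto
      have fN': "\<forall>s\<in>S - {a}. finite (N' s)" using less.prems(2) by (auto simp: N'_def)
      obtain f2 where f2: "inj_on f2 (S - {a})" "\<forall>s\<in>S-{a}. f2 s \<in> N' s"
        using less.hyps[OF cD fD fN' hallD] by blast
      define f where "f = f2(a := b)"
      have "inj_on f S"
        unfolding inj_on_def
      proof (intro ballI impI)
        fix x y assume x: "x \<in> S" and y: "y \<in> S" and fxy: "f x = f y"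
        show "x = y"
          using x y fxy f2 unfolding f_def inj_on_def N'_def
          by (metis Diff_iff fun_upd_apply insertI1 singletonD)
      qed
      moreover have "\<forall>s\<in>S. f s \<in> N s" using f2(2) b by (auto simp: f_def N'_def)
      ultimately show ?thesis by blast
    qed
  qed
qed



definition nb :: "('a \<Rightarrow> 'a \<Rightarrow> bool) \<Rightarrow> 'a set \<Rightarrow> 'a set" where
  "nb E X = {u. \<exists>x\<in>X. E x u}"

lemma graphD: assumes "graph V E"
  shows "finite V" "E u v \<Longrightarrow> u \<in> V" "E u v \<Longrightarrow> v \<in> V" "E u v \<Longrightarrow> E v u" "\<not> E u u"
  using assms unfolding graph_def by simp_all

lemma nb_sub: assumes "graph V E" shows "nb E X \<subseteq> V"
  unfolding nb_def using graphD(3)[OF assms] by blast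

lemma indep_fin: assumes "graph V E" "independent V E S" shows "finite S"
  using assms(2) graphD(1)[OF assms(1)] finite_subset unfolding independent_def by blast

lemma extend_max:
  assumes G: "graph V E" and S: "independent V E S"
  shows "\<exists>T. max_independent V E T \<and> S \<subseteq> T"
proof -
  define F where "F = {T. independent V E T \<and> S \<subseteq> T}"
  have "F \<subseteq> Pow V" unfolding F_def independent_def by auto
  then have fF: "finite F" using graphD(1)[OF G] finite_subset by blast
  have "S \<in> F" using S unfolding F_def by auto
  then have ne: "card ` F \<noteq> {}" by auto
  have "Max (card ` F) \<in> card ` F" using fF ne by auto
  then obtain T where T: "T \<in> F" "card T = Max (card ` F)" by auto
  have "max_independent V E T"
    unfolding max_independent_def
  proof (intro conjI allI impI)
    show "independent V E T" using T unfolding F_def by auto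
    fix T' assume T': "independent V E T' \<and> T \<subseteq> T'"
    then have "T' \<in> F" using T unfolding F_def by auto
    then have "card T' \<le> card T" using T fF by auto
    moreover have "finite T'" using indep_fin[OF G] T' by blast
    ultimately show "T' = T" using T' card_seteq by blast
  qed
  then show ?thesis using T unfolding F_def by auto
qed

lemma wc_le:
  assumes G: "graph V E" and W: "well_covered V E" and T: "max_independent V E T"
    and S: "independent V E S"
  shows "card S \<le> card T"
proof -
  obtain T' where T': "max_independent V E T'" "S \<subseteq> T'" using extend_max[OF G S] by blast
  have "finite T'" using T'(1) indep_fin[OF G] unfolding max_independent_def by blast
  then have "card S \<le> card T'" using T'(2) card_mono by blast
  also have "\<dots> = card T" using W T T'(1) unfolding well_covered_def by blast
  finally show ?thesis .
qed

lemma indep_mono: "independent V E S \<Longrightarrow> A \<subseteq> S \<Longrightarrow> independent V E A"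
  unfolding independent_def by blast

lemma indep_union:
  assumes G: "graph V E" and A: "independent V E A" and B: "independent V E B"
  shows "independent V E (A \<union> (B - nb E A))"
  unfolding independent_def
proof (intro conjI ballI)
  show "A \<union> (B - nb E A) \<subseteq> V" using A B unfolding independent_def by blast
  fix u v assume u: "u \<in> A \<union> (B - nb E A)" and v: "v \<in> A \<union> (B - nb E A)"
  show "\<not> E u v"
  proof
    assume e: "E u v"
    have e': "E v u" using graphD(4)[OF G e] .
    consider "u \<in> A" "v \<in> A" | "u \<in> A" "v \<in> B - nb E A" | "u \<in> B - nb E A" "v \<in> A"
      | "u \<in> B - nb E A" "v \<in> B - nb E A" using u v by blast
    then show False
    proof cases
      case 1 then show ?thesis using A e unfolding independent_def by blast
    next
      case 2 then show ?thesis using e unfolding nb_def by blast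
    next
      case 3 then show ?thesis using e' unfolding nb_def by blast
    next
      case 4 then show ?thesis using B e unfolding independent_def by blast
    qed
  qed
qed

lemma swap:
  assumes G: "graph V E" and W: "well_covered V E"
    and I: "independent V E I" and J: "independent V E J"
    and JN: "J \<subseteq> nb E I" and NJ: "nb E I \<subseteq> J \<union> nb E J"
  shows "card (I \<inter> nb E J) \<le> card J"
proof -
  obtain K0 where K0: "max_independent V E K0" "I \<subseteq> K0" using extend_max[OF G I] by blast
  define K where "K = K0 - I"
  have K0i: "independent V E K0" using K0 max_independent_def by blast
  have fK0: "finite K0" using indep_fin[OF G K0i] .
  have fI: "finite I" using indep_fin[OF G I] .
  have fJ: "finite J" using indep_fin[OF G J] .
  have cK0: "card K0 = card I + card K" unfolding K_def using K0(2) fK0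
    by (simp add: card_Diff_subset card_mono finite_subset)
  define Y where "Y = J \<union> (I - nb E J) \<union> (K - nb E J)"
  have "Y \<subseteq> J \<union> (K0 - nb E J)" using K0(2) unfolding Y_def K_def by blast
  then have Yi: "independent V E Y" using indep_union[OF G J K0i] indep_mono by blast
  obtain Y' where Y': "max_independent V E Y'" "Y \<subseteq> Y'" using extend_max[OF G Yi] by blast
  have Y'i: "independent V E Y'" using Y' max_independent_def by blast
  have cY': "card Y' = card K0" using W Y'(1) K0(1) unfolding well_covered_def by blast
  define R where "R = Y' - I - nb E I"
  have "I \<union> R \<subseteq> I \<union> (Y' - nb E I)" unfolding R_def by blast
  then have Ri: "independent V E (I \<union> R)" using indep_union[OF G I Y'i] indep_mono by blast
  have "card (I \<union> R) \<le> card K0" using wc_le[OF G W K0(1) Ri] .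
  moreover have "card (I \<union> R) = card I + card R"
    using fI indep_fin[OF G Ri] by (intro card_Un_disjoint) (auto simp: R_def)
  ultimately have cR: "card R \<le> card K" using cK0 by simp
  have sub: "Y' \<subseteq> J \<union> (I - nb E J) \<union> R"
  proof
    fix y assume y: "y \<in> Y'"
    show "y \<in> J \<union> (I - nb E J) \<union> R"
    proof (cases "y \<in> I")
      case True
      have "y \<notin> nb E J"
      proof
        assume "y \<in> nb E J"
        then obtain j where "j \<in> J" "E j y" unfolding nb_def by auto
        then show False using y Y' Y'i unfolding Y_def independent_def by blast
      qed
      then show ?thesis using True by auto
    next
      case False
      show ?thesis
      proof (cases "y \<in> nb E I")
        case True
        then have "y \<in> J \<union> nb E J" using NJ by auto
        moreover have "y \<notin> nb E J"
        proof
          assume "y \<in> nb E J"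
          then obtain j where "j \<in> J" "E j y" unfolding nb_def by auto
          then show False using y Y' Y'i unfolding Y_def independent_def by blast
        qed
        ultimately show ?thesis by auto
      next
        case False2: False
        then show ?thesis using False y unfolding R_def by auto
      qed
    qed
  qed
  have fR: "finite R" using indep_fin[OF G Ri] by auto
  have "card Y' \<le> card (J \<union> (I - nb E J) \<union> R)" using sub fJ fI fR by (intro card_mono) auto
  also have "\<dots> \<le> card J + card (I - nb E J) + card R"
    using card_Un_le[of "J \<union> (I - nb E J)" R] card_Un_le[of J "I - nb E J"] by linarith
  finally have "card I + card K \<le> card J + card (I - nb E J) + card K" using cY' cK0 cR by linarith
  moreover have "card (I - nb E J) + card (I \<inter> nb E J) = card I"
    using card_Int_Diff[OF fI, of "nb E J"] by linarith
  ultimately show ?thesis by linarith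
qed



lemma exists_max_indep_in:
  assumes G: "graph V E" and X: "X \<subseteq> V"
  shows "\<exists>J. independent V E J \<and> J \<subseteq> X \<and> X \<subseteq> J \<union> nb E J \<and>
             (\<forall>J'. independent V E J' \<and> J' \<subseteq> X \<longrightarrow> card J' \<le> card J)"
proof -
  define F where "F = {J. independent V E J \<and> J \<subseteq> X}"
  have "F \<subseteq> Pow V" unfolding F_def independent_def by auto
  then have fF: "finite F" using graphD(1)[OF G] finite_subset by blast
  have "{} \<in> F" unfolding F_def independent_def by auto
  then have ne: "card ` F \<noteq> {}" by auto
  have "Max (card ` F) \<in> card ` F" using fF ne by auto
  then obtain J where J: "J \<in> F" "card J = Max (card ` F)" by auto
  have Jmax: "\<forall>J'. independent V E J' \<and> J' \<subseteq> X \<longrightarrow> card J' \<le> card J"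
    using J fF unfolding F_def by auto
  have Ji: "independent V E J" "J \<subseteq> X" using J unfolding F_def by auto
  have "X \<subseteq> J \<union> nb E J"
  proof
    fix x assume x: "x \<in> X"
    show "x \<in> J \<union> nb E J"
    proof (rule ccontr)
      assume nx: "x \<notin> J \<union> nb E J"
      have "independent V E {x}" using x X graphD(5)[OF G] unfolding independent_def by auto
      have "insert x J \<subseteq> J \<union> ({x} - nb E J)" using nx by auto
      then have "independent V E (insert x J)"
        using indep_union[OF G Ji(1) \<open>independent V E {x}\<close>] indep_mono by blast
      moreover have "insert x J \<subseteq> X" using x Ji by auto
      ultimately have "card (insert x J) \<le> card J" using Jmax by blast
      moreover have "finite J" using indep_fin[OF G Ji(1)] .
      ultimately show False using nx by simp
    qed
  qed
  then show ?thesis using Ji Jmax by blast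
qed

lemma hall_cond:
  assumes G: "graph V E" and W: "well_covered V E" and NI: "no_isolated V E"
  shows "independent V E I \<Longrightarrow> card I \<le> card (nb E I)"
proof (induction "card I" arbitrary: I rule: less_induct)
  case less
  show ?case
  proof (rule ccontr)
    assume lt: "\<not> card I \<le> card (nb E I)"
    have fI: "finite I" using indep_fin[OF G less.prems] .
    have fN: "finite (nb E I)" using nb_sub[OF G] graphD(1)[OF G] finite_subset by blast
    then have "I \<noteq> {}" using lt by auto
    then obtain i where i: "i \<in> I" by blast
    have "i \<in> V" using less.prems i unfolding independent_def by auto
    then obtain u where "E i u" using NI unfolding no_isolated_def by blast
    then have u: "u \<in> nb E I" using i unfolding nb_def by blast
    obtain J where J: "independent V E J" "J \<subseteq> nb E I" "nb E I \<subseteq> J \<union> nb E J"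
      and Jm: "\<forall>J'. independent V E J' \<and> J' \<subseteq> nb E I \<longrightarrow> card J' \<le> card J"
      using exists_max_indep_in[OF G nb_sub[OF G, of I]] by blast
    have "independent V E {u}" using u nb_sub[OF G] graphD(5)[OF G] unfolding independent_def by auto
    then have "card {u} \<le> card J" using Jm u by blast
    then have "J \<noteq> {}" by auto
    then obtain j where j: "j \<in> J" by blast
    then obtain i' where i': "i' \<in> I" "E i' j" using J(2) unfolding nb_def by auto
    then have "i' \<in> nb E J" using j graphD(4)[OF G] unfolding nb_def by blast
    define A where "A = I - nb E J"
    have sw: "card (I \<inter> nb E J) \<le> card J" using swap[OF G W less.prems J] .
    have cA: "card A + card (I \<inter> nb E J) = card I"
      using card_Int_Diff[OF fI, of "nb E J"] unfolding A_def by linarith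
    have "I \<inter> nb E J \<noteq> {}" using i' \<open>i' \<in> nb E J\<close> by blast
    then have "card (I \<inter> nb E J) > 0" using fI by auto
    then have "card A < card I" using cA by linarith
    moreover have Ai: "independent V E A" using indep_mono[OF less.prems] unfolding A_def by blast
    ultimately have ih: "card A \<le> card (nb E A)" using less.hyps by blast
    have "nb E A \<subseteq> nb E I - J"
    proof
      fix y assume "y \<in> nb E A"
      then obtain a where a: "a \<in> A" "E a y" unfolding nb_def by auto
      have "y \<notin> J"
      proof
        assume "y \<in> J"
        then have "a \<in> nb E J" using a(2) graphD(4)[OF G] unfolding nb_def by blast
        then show False using a(1) unfolding A_def by blast
      qed
      moreover have "y \<in> nb E I" using a unfolding A_def nb_def by auto
      ultimately show "y \<in> nb E I - J" by blast
    qed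
    then have "card (nb E A) \<le> card (nb E I - J)" using fN by (intro card_mono) auto
    also have "\<dots> = card (nb E I) - card J" using J(2) by (meson card_Diff_subset fN finite_subset)
    finally have "card (nb E A) \<le> card (nb E I) - card J" .
    moreover have "card J \<le> card (nb E I)" using J(2) fN card_mono by blast
    ultimately show False using ih cA sw lt by linarith
  qed
qed



lemma indep_card_le_alpha:
  assumes G: "graph V E" and S: "independent V E S"
  shows "card S \<le> independence_number V E"
proof -
  have "{S. independent V E S} \<subseteq> Pow V" unfolding independent_def by auto
  then have "finite {S. independent V E S}" using graphD(1)[OF G] finite_subset by blast
  then show ?thesis unfolding independence_number_def using S by auto
qed

lemma wc_max_card:
  assumes G: "graph V E" and W: "well_covered V E" and S: "max_independent V E S"
  shows "card S = independence_number V E"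
proof -
  have "{S. independent V E S} \<subseteq> Pow V" unfolding independent_def by auto
  then have fF: "finite {S. independent V E S}" using graphD(1)[OF G] finite_subset by blast
  have "{} \<in> {S. independent V E S}" unfolding independent_def by auto
  then have "independence_number V E \<in> card ` {S. independent V E S}"
    unfolding independence_number_def using fF by (intro Max_in) auto
  then obtain S0 where S0: "independent V E S0" "card S0 = independence_number V E" by auto
  have "card S0 \<le> card S" using wc_le[OF G W S S0(1)] .
  moreover have "card S \<le> independence_number V E"
    using indep_card_le_alpha[OF G] S unfolding max_independent_def by blast
  ultimately show ?thesis using S0 by linarith
qed

lemma vwc_pm:
  assumes G: "graph V E" and VW: "very_well_covered V E"
  shows "\<exists>M. perfect_matching V E M"
proof -
  have W: "well_covered V E" and NI: "no_isolated V E" and A: "2 * independence_number V E = card V"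
    using VW unfolding very_well_covered_def by auto
  have fV: "finite V" using graphD(1)[OF G] .
  have "independent V E {}" unfolding independent_def by auto
  then obtain S where S: "max_independent V E S" using extend_max[OF G] by blast
  have Si: "independent V E S" using S max_independent_def by blast
  have cS: "2 * card S = card V" using wc_max_card[OF G W S] A by simp
  have fS: "finite S" using indep_fin[OF G Si] .
  define N where "N = (\<lambda>s. {t. E s t})"
  have fN: "\<forall>s\<in>S. finite (N s)" unfolding N_def using graphD(3)[OF G] fV
    by (metis finite_subset mem_Collect_eq subsetI)
  have hc: "\<forall>A\<subseteq>S. card A \<le> card (\<Union>(N ` A))"
  proof (intro allI impI)
    fix A assume "A \<subseteq> S"
    then have "independent V E A" using indep_mono[OF Si] by blast
    then have "card A \<le> card (nb E A)" using hall_cond[OF G W NI] by blast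
    moreover have "\<Union>(N ` A) = nb E A" unfolding N_def nb_def by auto
    ultimately show "card A \<le> card (\<Union>(N ` A))" by simp
  qed
  obtain f where f: "inj_on f S" "\<forall>s\<in>S. E s (f s)"
    using hall[OF fS fN hc] unfolding N_def by auto
  have fsub: "f ` S \<subseteq> V - S"
  proof
    fix y assume "y \<in> f ` S"
    then obtain s where s: "s \<in> S" "y = f s" by auto
    have "E s y" using f(2) s by auto
    then show "y \<in> V - S" using Si s graphD(3)[OF G] unfolding independent_def by blast
  qed
  have "card (f ` S) = card S" using card_image[OF f(1)] .
  moreover have "card (V - S) = card S"
  proof -
    have "S \<subseteq> V" using Si unfolding independent_def by blast
    then have "card (V - S) = card V - card S" using fS card_Diff_subset by blast
    then show ?thesis using cS by linarith
  qed
  ultimately have fim: "f ` S = V - S" using fsub fV by (metis card_subset_eq finite_Diff)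
  define M where "M = (\<lambda>s. {s, f s}) ` S"
  have "perfect_matching V E M"
    unfolding perfect_matching_def
  proof (intro conjI)
    show "\<forall>e\<in>M. \<exists>u v. e = {u, v} \<and> E u v" unfolding M_def using f(2) by blast
    show "disjoint M"
      unfolding disjoint_def
    proof (intro ballI impI)
      fix a b assume a: "a \<in> M" and b: "b \<in> M" and ab: "a \<noteq> b"
      obtain s where s: "s \<in> S" "a = {s, f s}" using a M_def by auto
      obtain t where t: "t \<in> S" "b = {t, f t}" using b M_def by auto
      have st: "s \<noteq> t" using ab s t by auto
      have "f s \<notin> S" "f t \<notin> S" using fsub s t by auto
      moreover have "f s \<noteq> f t" using f(1) s t st unfolding inj_on_def by blast
      ultimately show "a \<inter> b = {}" using s t st by auto
    qed
    show "\<Union>M = V"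
    proof -
      have "\<Union>M = S \<union> f ` S" unfolding M_def by auto
      also have "\<dots> = V" using fim Si unfolding independent_def by auto
      finally show ?thesis .
    qed
  qed
  then show ?thesis by blast
qed



lemma pm_fin:
  assumes G: "graph V E" and M: "perfect_matching V E M"
  shows "finite M"
proof -
  have "\<Union>M = V" using M unfolding perfect_matching_def by blast
  then show ?thesis using graphD(1)[OF G] finite_UnionD by blast
qed

lemma pm_edge:
  assumes G: "graph V E" and M: "perfect_matching V E M" and e: "e \<in> M"
  shows "card e = 2" "clique V E e" "finite e"
proof -
  obtain u v where uv: "e = {u, v}" "E u v" using M e unfolding perfect_matching_def by blast
  have "u \<noteq> v" using uv(2) graphD(5)[OF G] by metis
  then show "card e = 2" using uv by simp
  show "finite e" using uv by simp
  have "E v u" using graphD(4)[OF G uv(2)] .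
  moreover have "u \<in> V" "v \<in> V" using graphD(2,3)[OF G uv(2)] by auto
  ultimately show "clique V E e" unfolding clique_def using uv by auto
qed

lemma pm_count:
  assumes G: "graph V E" and M: "perfect_matching V E M" and S: "S \<subseteq> V"
  shows "card S = (\<Sum>e\<in>M. card (e \<inter> S))"
proof -
  have U: "\<Union>M = V" and D: "disjoint M" using M unfolding perfect_matching_def by blast+
  have "S = \<Union>((\<lambda>e. e \<inter> S) ` M)" using U S by auto
  moreover have "card (\<Union>((\<lambda>e. e \<inter> S) ` M)) = (\<Sum>e\<in>M. card (e \<inter> S))"
  proof (rule card_UN_disjoint)
    show "finite M" using pm_fin[OF G M] .
    show "\<forall>i\<in>M. finite (i \<inter> S)" using pm_edge(3)[OF G M] by blast
    show "\<forall>i\<in>M. \<forall>j\<in>M. i \<noteq> j \<longrightarrow> i \<inter> S \<inter> (j \<inter> S) = {}"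
      using D unfolding disjoint_def by blast
  qed
  ultimately show ?thesis by simp
qed

lemma pm_cardV:
  assumes G: "graph V E" and M: "perfect_matching V E M"
  shows "card V = 2 * card M"
proof -
  have "card V = (\<Sum>e\<in>M. card (e \<inter> V))" using pm_count[OF G M] by blast
  also have "\<dots> = (\<Sum>e\<in>M. 2)"
  proof (rule sum.cong)
    fix e assume e: "e \<in> M"
    have "e \<subseteq> V" using M e unfolding perfect_matching_def by blast
    then show "card (e \<inter> V) = 2" using pm_edge(1)[OF G M e] by (simp add: Int_absorb2)
  qed simp
  finally show ?thesis by simp
qed

lemma pm_le1:
  assumes G: "graph V E" and M: "perfect_matching V E M" and e: "e \<in> M"
    and S: "independent V E S"
  shows "card (e \<inter> S) \<le> 1"
proof -
  obtain u v where uv: "e = {u, v}" "E u v" using M e unfolding perfect_matching_def by blast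
  have "\<not> (u \<in> S \<and> v \<in> S)" using S uv(2) unfolding independent_def by blast
  then have "e \<inter> S \<subseteq> {u} \<or> e \<inter> S \<subseteq> {v}" using uv by auto
  then obtain w where "e \<inter> S \<subseteq> {w}" by blast
  then have "card (e \<inter> S) \<le> card {w}" by (intro card_mono) auto
  then show ?thesis by simp
qed

lemma pm_strong:
  assumes G: "graph V E" and VW: "very_well_covered V E" and M: "perfect_matching V E M"
    and e: "e \<in> M"
  shows "strong_clique V E e"
  unfolding strong_clique_def
proof (intro conjI allI impI)
  show "clique V E e" using pm_edge(2)[OF G M e] .
  fix S assume S: "max_independent V E S"
  have W: "well_covered V E" and A: "2 * independence_number V E = card V"
    using VW unfolding very_well_covered_def by auto
  have Si: "independent V E S" using S max_independent_def by blast
  have cS: "card S = card M" using wc_max_card[OF G W S] A pm_cardV[OF G M] by simp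
  show "e \<inter> S \<noteq> {}"
  proof
    assume e0: "e \<inter> S = {}"
    have fM: "finite M" using pm_fin[OF G M] .
    have "card S = (\<Sum>e\<in>M. card (e \<inter> S))" using pm_count[OF G M] Si unfolding independent_def by blast
    also have "\<dots> = card (e \<inter> S) + (\<Sum>e'\<in>M - {e}. card (e' \<inter> S))"
      using sum.remove[OF fM e] by blast
    also have "\<dots> \<le> 0 + (\<Sum>e'\<in>M - {e}. 1)"
      using e0 pm_le1[OF G M _ Si] by (intro add_mono sum_mono) auto
    also have "\<dots> = card M - 1" using e fM by simp
    finally have "card S \<le> card M - 1" .
    moreover have "card M > 0" using e fM card_gt_0_iff by blast
    ultimately show False using cS by linarith
  qed
qed

lemma strong_pm_vwc:
  assumes G: "graph V E" and NI: "no_isolated V E" and M: "perfect_matching V E M"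
    and SM: "\<forall>e\<in>M. strong_clique V E e"
  shows "very_well_covered V E"
proof -
  have mc: "card S = card M" if S: "max_independent V E S" for S
  proof -
    have Si: "independent V E S" using S max_independent_def by blast
    have "card S = (\<Sum>e\<in>M. card (e \<inter> S))" using pm_count[OF G M] Si unfolding independent_def by blast
    also have "\<dots> = (\<Sum>e\<in>M. 1)"
    proof (rule sum.cong)
      fix e assume e: "e \<in> M"
      have "e \<inter> S \<noteq> {}" using SM e S unfolding strong_clique_def by blast
      then have "card (e \<inter> S) \<noteq> 0" using pm_edge(3)[OF G M e] by simp
      then show "card (e \<inter> S) = 1" using pm_le1[OF G M e Si] by linarith
    qed simp
    finally show ?thesis by simp
  qed
  have W: "well_covered V E" unfolding well_covered_def using mc by auto
  have "independent V E {}" unfolding independent_def by auto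
  then obtain S0 where S0: "max_independent V E S0" using extend_max[OF G] by blast
  have "independence_number V E = card M" using wc_max_card[OF G W S0] mc[OF S0] by simp
  then have "2 * independence_number V E = card V" using pm_cardV[OF G M] by simp
  then show ?thesis unfolding very_well_covered_def using W NI by blast
qed

theorem mainTheorem5:
  fixes V :: "'a set" and E :: "'a \<Rightarrow> 'a \<Rightarrow> bool"
  assumes "graph V E" and "no_isolated V E"
  shows "(very_well_covered V E \<longleftrightarrow>
            (\<exists>M. perfect_matching V E M \<and> (\<forall>e\<in>M. strong_clique V E e)))
       \<and> (very_well_covered V E \<longleftrightarrow>
            ((\<exists>M. perfect_matching V E M) \<and>
             (\<forall>M. perfect_matching V E M \<longrightarrow> (\<forall>e\<in>M. strong_clique V E e))))
       \<and> (very_well_covered V E \<longleftrightarrow>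
            (\<exists>P. partition_on V P \<and> (\<forall>C\<in>P. strong_clique V E C \<and> card C = 2)))
       \<and> (very_well_covered V E \<longrightarrow> localizable V E)"
proof -
  note G = assms(1) and NI = assms(2)
  have A: "very_well_covered V E \<longleftrightarrow>
            (\<exists>M. perfect_matching V E M \<and> (\<forall>e\<in>M. strong_clique V E e))"
  proof
    assume VW: "very_well_covered V E"
    obtain M where M: "perfect_matching V E M" using vwc_pm[OF G VW] by blast
    then show "\<exists>M. perfect_matching V E M \<and> (\<forall>e\<in>M. strong_clique V E e)"
      using pm_strong[OF G VW] by blast
  next
    assume "\<exists>M. perfect_matching V E M \<and> (\<forall>e\<in>M. strong_clique V E e)"
    then show "very_well_covered V E" using strong_pm_vwc[OF G NI] by blast
  qed
  have B: "very_well_covered V E \<longleftrightarrow>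
            ((\<exists>M. perfect_matching V E M) \<and>
             (\<forall>M. perfect_matching V E M \<longrightarrow> (\<forall>e\<in>M. strong_clique V E e)))"
    using A vwc_pm[OF G] pm_strong[OF G] by blast
  have C: "very_well_covered V E \<longleftrightarrow>
            (\<exists>P. partition_on V P \<and> (\<forall>C\<in>P. strong_clique V E C \<and> card C = 2))"
  proof
    assume "very_well_covered V E"
    then obtain M where M: "perfect_matching V E M" "\<forall>e\<in>M. strong_clique V E e" using A by blast
    have "partition_on V M" unfolding partition_on_def
    proof (intro conjI)
      show "\<Union>M = V" "disjoint M" using M(1) unfolding perfect_matching_def by blast+
      show "{} \<notin> M" using pm_edge(1)[OF G M(1)] by fastforce
    qed
    then show "\<exists>P. partition_on V P \<and> (\<forall>C\<in>P. strong_clique V E C \<and> card C = 2)"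
      using M pm_edge(1)[OF G M(1)] by blast
  next
    assume "\<exists>P. partition_on V P \<and> (\<forall>C\<in>P. strong_clique V E C \<and> card C = 2)"
    then obtain P where P: "partition_on V P" "\<forall>C\<in>P. strong_clique V E C \<and> card C = 2" by blast
    have "perfect_matching V E P" unfolding perfect_matching_def
    proof (intro conjI)
      show "\<Union>P = V" "disjoint P" using P(1) unfolding partition_on_def by blast+
      show "\<forall>e\<in>P. \<exists>u v. e = {u, v} \<and> E u v"
      proof
        fix e assume e: "e \<in> P"
        then have "card e = 2" "clique V E e" using P(2) unfolding strong_clique_def by auto
        then obtain u v where "e = {u, v}" "u \<noteq> v" by (meson card_2_iff)
        then have "E u v" using \<open>clique V E e\<close> unfolding clique_def by blast
        then show "\<exists>u v. e = {u, v} \<and> E u v" using \<open>e = {u, v}\<close> by blast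
      qed
    qed
    then show "very_well_covered V E" using strong_pm_vwc[OF G NI] P(2) by blast
  qed
  have D: "very_well_covered V E \<longrightarrow> localizable V E"
    using C unfolding localizable_def by blast
  show ?thesis using A B C D by blast
qed

end
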